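(* Let $G_1,G_2,\ldots,G_k$ be a finite sequence of pairwise disjoint connected graphs and let $x_i\in V(G_i)$. Let $G$ be the circuit of graphs $\{G_i\}_{i=1}^k$ with respect to the vertices $\{x_i\}_{i=1}^k$, i.e. the graph obtained by identifying the vertex $x_i$ of the graph $G_i$ with the $i$-th vertex of the cycle graph $C_k$. Then $$SO(G)\geq 2k\sqrt{2}+\sum_{i=1}^{k}SO(G_i).$$ The equality holds if and only if for every $1\leq i\leq k$, $G_i=K_1$.
   Context: For a finite simple graph $H$, the Sombor index is $SO(H)=\sum_{uv\in E(H)}\sqrt{d_u^2+d_v^2}$, where $d_u$ is the degree of vertex $u$ in $H$. *)

theory Defs
  imports Complex_Main
begin

definition simple_graph :: "'a set \<Rightarrow> 'a set set \<Rightarrow> bool" where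
  "simple_graph V E \<longleftrightarrow> finite V \<and>
     (\<forall>e\<in>E. \<exists>u v. u \<noteq> v \<and> u \<in> V \<and> v \<in> V \<and> e = {u, v})"

definition degree :: "'a set set \<Rightarrow> 'a \<Rightarrow> nat" where
  "degree E v = card {e \<in> E. v \<in> e}"

definition sombor :: "'a set set \<Rightarrow> real" where
  "sombor E = (\<Sum>e\<in>E. sqrt (\<Sum>v\<in>e. (real (degree E v))^2))"

definition adj_rel :: "'a set set \<Rightarrow> ('a \<times> 'a) set" where
  "adj_rel E = {(u, v). {u, v} \<in> E}"

definition connected_graph :: "'a set \<Rightarrow> 'a set set \<Rightarrow> bool" where
  "connected_graph V E \<longleftrightarrow> V \<noteq> {} \<and> (\<forall>u\<in>V. \<forall>v\<in>V. (u, v) \<in> (adj_rel E)\<^sup>*)"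

text \<open>Circuit of graphs (V i, E i), i < k, w.r.t. vertices x i: vertex x i is identified
  with the i-th vertex of the cycle C_k (vertices 0..k-1, edges {i, (i+1) mod k}).\<close>
definition circuit_E :: "nat \<Rightarrow> (nat \<Rightarrow> 'a set set) \<Rightarrow> (nat \<Rightarrow> 'a) \<Rightarrow> 'a set set" where
  "circuit_E k E x = (\<Union>i<k. E i) \<union> {{x i, x (Suc i mod k)} | i. i < k}"

end

theory Submission
  imports Defs
begin

theorem mainTheorem6:
  fixes k :: nat and V :: "nat \<Rightarrow> 'a set" and E :: "nat \<Rightarrow> 'a set set" and x :: "nat \<Rightarrow> 'a"
  assumes k3: "k \<ge> 3"
    and graphs: "\<forall>i<k. simple_graph (V i) (E i)"
    and conn: "\<forall>i<k. connected_graph (V i) (E i)"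
    and disj: "\<forall>i<k. \<forall>j<k. i \<noteq> j \<longrightarrow> V i \<inter> V j = {}"
    and xin: "\<forall>i<k. x i \<in> V i"
  shows "sombor (circuit_E k E x) \<ge> 2 * real k * sqrt 2 + (\<Sum>i<k. sombor (E i)) \<and>
         (sombor (circuit_E k E x) = 2 * real k * sqrt 2 + (\<Sum>i<k. sombor (E i))
           \<longleftrightarrow> (\<forall>i<k. V i = {x i}))"
proof -
  define F where "F = circuit_E k E x"
  define s where "s = (\<lambda>i. Suc i mod k)"
  define p where "p = (\<lambda>i. (i + k - 1) mod k)"
  define C where "C = (\<lambda>i. {x i, x (s i)}) ` {..<k}"
  define f where "f = (\<lambda>e. sqrt (\<Sum>v\<in>e. (real (degree F v))^2))"
  have F_eq: "F = (\<Union>i<k. E i) \<union> C"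
    unfolding F_def circuit_E_def C_def s_def by auto
  have s_alt: "\<And>j. j < k \<Longrightarrow> s j = (if Suc j = k then 0 else Suc j)"
    unfolding s_def by auto
  have p_alt: "\<And>i. i < k \<Longrightarrow> p i = (if i = 0 then k - 1 else i - 1)"
  proof -
    fix i assume i: "i < k"
    show "p i = (if i = 0 then k - 1 else i - 1)"
    proof (cases "i = 0")
      case True then show ?thesis using i unfolding p_def by simp
    next
      case False
      then have "i + k - 1 = (i - 1) + k" using i by simp
      then have "(i + k - 1) mod k = (i - 1) mod k" by simp
      then show ?thesis using False i unfolding p_def by simp
    qed
  qed
  have s_lt: "\<And>i. i < k \<Longrightarrow> s i < k" using s_alt k3 by auto
  have p_lt: "\<And>i. i < k \<Longrightarrow> p i < k" using p_alt k3 by auto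
  have sp: "\<And>i. i < k \<Longrightarrow> s (p i) = i" using s_alt p_alt p_lt k3 by auto
  have s_ne: "\<And>i. i < k \<Longrightarrow> s i \<noteq> i" using s_alt k3 by auto
  have ss_ne: "\<And>i. i < k \<Longrightarrow> s (s i) \<noteq> i"
  proof -
    fix i assume i: "i < k"
    show "s (s i) \<noteq> i" using s_alt[OF i] s_alt[OF s_lt[OF i]] i k3 by auto
  qed
  have s_inv: "\<And>i j. i < k \<Longrightarrow> j < k \<Longrightarrow> s j = i \<Longrightarrow> j = p i"
  proof -
    fix i j assume i: "i < k" and j: "j < k" and h: "s j = i"
    show "j = p i" using s_alt[OF j] p_alt[OF i] h by (cases "Suc j = k") auto
  qed
  have xinj: "\<And>i j. i<k \<Longrightarrow> j<k \<Longrightarrow> x i = x j \<Longrightarrow> i = j"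
  proof (rule ccontr)
    fix i j assume i: "i<k" and j: "j<k" and h: "x i = x j" and ne: "i \<noteq> j"
    have "V i \<inter> V j = {}" using disj i j ne by blast
    moreover have "x i \<in> V i" "x i \<in> V j" using xin i j h by auto
    ultimately show False by blast
  qed
  have xs_ne: "\<And>i. i < k \<Longrightarrow> x i \<noteq> x (s i)"
  proof -
    fix i assume i: "i < k"
    show "x i \<noteq> x (s i)"
    proof
      assume "x i = x (s i)"
      then have "i = s i" using xinj[OF i s_lt[OF i]] by simp
      then show False using s_ne[OF i] by simp
    qed
  qed
  have Cinj: "inj_on (\<lambda>i. {x i, x (s i)}) {..<k}"
  proof (rule inj_onI)
    fix i j assume i: "i \<in> {..<k}" and j: "j \<in> {..<k}" and eq: "{x i, x (s i)} = {x j, x (s j)}"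
    from eq have "(x i = x j \<and> x (s i) = x (s j)) \<or> (x i = x (s j) \<and> x (s i) = x j)"
      by (simp add: doubleton_eq_iff)
    then show "i = j"
    proof
      assume "x i = x j \<and> x (s i) = x (s j)" then show ?thesis using xinj i j by auto
    next
      assume a: "x i = x (s j) \<and> x (s i) = x j"
      then have "i = s j" "s i = j" using xinj i j s_lt by auto
      then show ?thesis using ss_ne j by auto
    qed
  qed
  have edge: "\<And>i e. i < k \<Longrightarrow> e \<in> E i \<Longrightarrow> \<exists>u v. u \<noteq> v \<and> u \<in> V i \<and> v \<in> V i \<and> e = {u, v}"
    using graphs unfolding simple_graph_def by blast
  have finV: "\<And>i. i < k \<Longrightarrow> finite (V i)" using graphs unfolding simple_graph_def by blast
  have finE: "\<And>i. i < k \<Longrightarrow> finite (E i)"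
  proof -
    fix i assume i: "i < k"
    have "E i \<subseteq> Pow (V i)" using edge[OF i] by blast
    then show "finite (E i)" using finV[OF i] finite_subset by blast
  qed
  have finC: "finite C" unfolding C_def by simp
  have finU: "finite (\<Union>i<k. E i)" using finE by auto
  have finF: "finite F" using F_eq finC finU by simp
  have disjE: "\<forall>i\<in>{..<k}. \<forall>j\<in>{..<k}. i \<noteq> j \<longrightarrow> E i \<inter> E j = {}"
  proof (intro ballI impI)
    fix i j assume i: "i \<in> {..<k}" and j: "j \<in> {..<k}" and ij: "i \<noteq> j"
    show "E i \<inter> E j = {}"
    proof (rule ccontr)
      assume "E i \<inter> E j \<noteq> {}"
      then obtain e where "e \<in> E i" "e \<in> E j" by blast
      then have ei: "e \<in> E i" and ej: "e \<in> E j" by auto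
      have ik: "i < k" and jk: "j < k" using i j by auto
      obtain u v where uv: "u \<in> V i" "e = {u, v}" using edge[OF ik ei] by blast
      obtain u' v' where uv': "u' \<in> V j" "v' \<in> V j" "e = {u', v'}" using edge[OF jk ej] by blast
      have "u \<in> V j" using uv uv' by auto
      then show False using disj ik jk ij uv(1) by blast
    qed
  qed
  have disjUC: "(\<Union>i<k. E i) \<inter> C = {}"
  proof (rule ccontr)
    assume "(\<Union>i<k. E i) \<inter> C \<noteq> {}"
    then obtain i j where i: "i < k" and j: "j < k" and e: "{x j, x (s j)} \<in> E i"
      unfolding C_def by blast
    obtain u v where uv: "u \<in> V i" "v \<in> V i" "{x j, x (s j)} = {u, v}"
      using edge[OF i e] by blast
    then have a: "x j \<in> V i" "x (s j) \<in> V i" by auto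
    have "i = j" using a(1) xin j disj i by blast
    moreover have "i = s j" using a(2) xin s_lt[OF j] disj i by blast
    ultimately show False using s_ne j by auto
  qed
  have degF: "\<And>i v. i < k \<Longrightarrow> degree (E i) v \<le> degree F v"
  proof -
    fix i v assume i: "i < k"
    have "{e \<in> E i. v \<in> e} \<subseteq> {e \<in> F. v \<in> e}" using F_eq i by auto
    then show "degree (E i) v \<le> degree F v" unfolding degree_def
      using finF by (simp add: card_mono)
  qed
  have degx: "\<And>i. i < k \<Longrightarrow> degree (E i) (x i) + 2 \<le> degree F (x i)"
  proof -
    fix i assume i: "i < k"
    let ?A = "{e \<in> E i. x i \<in> e}"
    let ?B = "{{x i, x (s i)}, {x (p i), x i}}"
    have B_C: "?B \<subseteq> C" unfolding C_def using i p_lt sp by (auto simp: image_iff)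
    have neq: "{x i, x (s i)} \<noteq> {x (p i), x i}"
    proof
      assume "{x i, x (s i)} = {x (p i), x i}"
      then have "x (s i) = x (p i)" using xs_ne[OF i] by (auto simp: doubleton_eq_iff)
      then have "s i = p i" using xinj s_lt p_lt i by auto
      then show False using sp i ss_ne by metis
    qed
    have cB: "card ?B = 2" using neq by simp
    have dAB: "?A \<inter> ?B = {}" using B_C disjUC i by blast
    have "?A \<union> ?B \<subseteq> {e \<in> F. x i \<in> e}" using F_eq B_C i by auto
    then have "card (?A \<union> ?B) \<le> card {e \<in> F. x i \<in> e}" using finF by (simp add: card_mono)
    moreover have "card (?A \<union> ?B) = card ?A + 2"
      using card_Un_disjoint[of ?A ?B] dAB cB finE[OF i] by simp
    ultimately show "degree (E i) (x i) + 2 \<le> degree F (x i)" unfolding degree_def by simp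
  qed
  define t where "t = (\<lambda>i. sqrt ((real (degree F (x i)))^2 + (real (degree F (x (s i))))^2))"
  have sumC: "(\<Sum>e\<in>C. f e) = (\<Sum>i<k. t i)"
    unfolding C_def using Cinj xs_ne by (simp add: sum.reindex f_def t_def)
  have sumU: "(\<Sum>e\<in>(\<Union>i<k. E i). f e) = (\<Sum>i<k. \<Sum>e\<in>E i. f e)"
    using sum.UNION_disjoint[of "{..<k}" E f] finE disjE by simp
  have SO: "sombor F = (\<Sum>i<k. \<Sum>e\<in>E i. f e) + (\<Sum>i<k. t i)"
    unfolding sombor_def f_def[symmetric] F_eq[symmetric]
    using sum.union_disjoint[OF finU finC disjUC, of f] F_eq sumU sumC by simp
  have partA: "\<And>i. i < k \<Longrightarrow> sombor (E i) \<le> (\<Sum>e\<in>E i. f e)"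
    unfolding sombor_def f_def
    by (intro sum_mono real_sqrt_le_mono power_mono) (auto simp: degF)
  have A: "(\<Sum>i<k. sombor (E i)) \<le> (\<Sum>i<k. \<Sum>e\<in>E i. f e)"
    using partA by (intro sum_mono) auto
  have s8: "sqrt 8 = 2 * sqrt (2::real)"
  proof -
    have "sqrt (8::real) = sqrt (2^2 * 2)" by simp
    also have "\<dots> = 2 * sqrt 2" by (simp only: real_sqrt_mult real_sqrt_abs)
    finally show ?thesis .
  qed
  have dge2: "\<And>i. i < k \<Longrightarrow> 2 \<le> real (degree F (x i))" using degx by fastforce
  have tge: "\<And>i. i < k \<Longrightarrow> 2 * sqrt 2 \<le> t i"
  proof -
    fix i assume i: "i < k"
    have a: "(2::real)^2 \<le> (real (degree F (x i)))^2" using dge2[OF i] by (intro power_mono) auto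
    have b: "(2::real)^2 \<le> (real (degree F (x (s i))))^2" using dge2[OF s_lt[OF i]] by (intro power_mono) auto
    have "sqrt 8 \<le> t i" unfolding t_def using a b by (intro real_sqrt_le_mono) simp
    then show "2 * sqrt 2 \<le> t i" using s8 by simp
  qed
  have B: "2 * real k * sqrt 2 \<le> (\<Sum>i<k. t i)"
  proof -
    have "(\<Sum>i<k. 2 * sqrt 2) \<le> (\<Sum>i<k. t i)" using tge by (intro sum_mono) auto
    then show ?thesis by simp
  qed
  have part1: "sombor F \<ge> 2 * real k * sqrt 2 + (\<Sum>i<k. sombor (E i))"
    using SO A B by simp
  have part2: "sombor F = 2 * real k * sqrt 2 + (\<Sum>i<k. sombor (E i)) \<longleftrightarrow> (\<forall>i<k. V i = {x i})"
  proof
    assume eq: "sombor F = 2 * real k * sqrt 2 + (\<Sum>i<k. sombor (E i))"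
    have "(\<Sum>i<k. t i) = 2 * real k * sqrt 2" using SO A B eq by simp
    then have "(\<Sum>i<k. t i - 2 * sqrt 2) = 0" by (simp add: sum_subtractf)
    then have teq: "\<forall>i\<in>{..<k}. t i - 2 * sqrt 2 = 0"
      using sum_nonneg_eq_0_iff[of "{..<k}" "\<lambda>i. t i - 2 * sqrt 2"] tge by simp
    show "\<forall>i<k. V i = {x i}"
    proof (intro allI impI)
      fix i assume i: "i < k"
      have "t i = sqrt 8" using teq i s8 by simp
      then have "(real (degree F (x i)))^2 + (real (degree F (x (s i))))^2 = 8"
        unfolding t_def by simp
      moreover have "(2::real)^2 \<le> (real (degree F (x i)))^2" using dge2[OF i] by (intro power_mono) auto
      moreover have "(2::real)^2 \<le> (real (degree F (x (s i))))^2" using dge2[OF s_lt[OF i]] by (intro power_mono) auto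
      ultimately have "(real (degree F (x i)))^2 = 2^2" by simp
      then have "real (degree F (x i)) = 2" using power2_eq_iff_nonneg[of "real (degree F (x i))" 2] by simp
      then have "degree (E i) (x i) = 0" using degx[OF i] by simp
      then have noe: "{e \<in> E i. x i \<in> e} = {}" unfolding degree_def using finE[OF i] by simp
      show "V i = {x i}"
      proof (rule ccontr)
        assume "V i \<noteq> {x i}"
        then obtain v where v: "v \<in> V i" "v \<noteq> x i" using xin i by blast
        have "(x i, v) \<in> (adj_rel (E i))\<^sup>*" using conn i v xin unfolding connected_graph_def by blast
        then show False
        proof (cases rule: converse_rtranclE)
          case base then show ?thesis using v by simp
        next
          case (step y)
          then have "{x i, y} \<in> E i" unfolding adj_rel_def by simp
          then show ?thesis using noe by auto
        qed
      qed
    qed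
  next
    assume all: "\<forall>i<k. V i = {x i}"
    have Eempty: "\<And>i. i < k \<Longrightarrow> E i = {}"
    proof -
      fix i assume i: "i < k"
      show "E i = {}"
      proof (rule ccontr)
        assume "E i \<noteq> {}"
        then obtain e where "e \<in> E i" by blast
        then show False using edge[OF i] all i by force
      qed
    qed
    have FC: "F = C" using F_eq Eempty by simp
    have dle: "\<And>i. i < k \<Longrightarrow> degree F (x i) \<le> 2"
    proof -
      fix i assume i: "i < k"
      have "{e \<in> F. x i \<in> e} \<subseteq> {{x i, x (s i)}, {x (p i), x i}}"
      proof
        fix e assume "e \<in> {e \<in> F. x i \<in> e}"
        then obtain j where j: "j < k" and e: "e = {x j, x (s j)}" and xe: "x i \<in> e"
          unfolding FC C_def by blast
        from xe e have "x i = x j \<or> x i = x (s j)" by auto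
        then show "e \<in> {{x i, x (s i)}, {x (p i), x i}}"
        proof
          assume "x i = x j" then have "i = j" using xinj i j by auto
          then show ?thesis using e by simp
        next
          assume "x i = x (s j)" then have "i = s j" using xinj i j s_lt by auto
          then have "j = p i" using s_inv i j by auto
          then show ?thesis using e \<open>i = s j\<close> by auto
        qed
      qed
      then have "card {e \<in> F. x i \<in> e} \<le> card {{x i, x (s i)}, {x (p i), x i}}"
        by (simp add: card_mono)
      also have "\<dots> \<le> 2" by (simp add: card_insert_le_m1)
      finally show "degree F (x i) \<le> 2" unfolding degree_def .
    qed
    have d2: "\<And>i. i < k \<Longrightarrow> degree F (x i) = 2" using dle degx by fastforce
    have "\<And>i. i < k \<Longrightarrow> t i = 2 * sqrt 2"
      unfolding t_def using d2 s_lt s8 by simp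
    then have "(\<Sum>i<k. t i) = 2 * real k * sqrt 2" by simp
    moreover have "(\<Sum>i<k. \<Sum>e\<in>E i. f e) = 0" "(\<Sum>i<k. sombor (E i)) = 0"
      using Eempty by (simp_all add: sombor_def)
    ultimately show "sombor F = 2 * real k * sqrt 2 + (\<Sum>i<k. sombor (E i))"
      using SO by simp
  qed
  show ?thesis using part1 part2 unfolding F_def by simp
qed

end
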